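(* Let $m\ge3$ be odd and $n\ge2$. The $m$th order $n$-dimensional Hilbert tensor $\mathcal{A}=(a_{i_1\dots i_m})$, $a_{i_1\dots i_m}=\frac{1}{i_1+\cdots+i_m-m+1}$ for $i_1,\dots,i_m\in\{1,\dots,n\}$, is strongly positive definite.
   Context: For $\mathbf{x}\in\mathbb{R}^n$, $\mathcal{A}\mathbf{x}^{m-1}$ is the vector with $i$th component $\sum_{i_2,\dots,i_m}a_{ii_2\dots i_m}x_{i_2}\cdots x_{i_m}$. For odd $m$ and symmetric $\mathcal{A}$, $\mathcal{A}$ is strongly positive definite if $\mathcal{A}\mathbf{x}^{m-1}>\mathbf{0}$ componentwise for all nonzero $\mathbf{x}\in\mathbb{R}^n$. *)

theory Defs
  imports "HOL-Analysis.Analysis"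
begin

text \<open>An m-th order n-dimensional real tensor is represented as a function on index
lists; only index lists of length m with entries in {1..n} are relevant.
A vector in R^n is a function nat => real, only components 1..n are relevant.\<close>

type_synonym tensor = "nat list \<Rightarrow> real"

definition index_lists :: "nat \<Rightarrow> nat \<Rightarrow> nat list set" where
  "index_lists k n = {is. length is = k \<and> set is \<subseteq> {1..n}}"

definition tensor_apply :: "nat \<Rightarrow> nat \<Rightarrow> tensor \<Rightarrow> (nat \<Rightarrow> real) \<Rightarrow> nat \<Rightarrow> real" where
  "tensor_apply m n A x i =
     (\<Sum>is\<in>index_lists (m - 1) n. A (i # is) * (\<Prod>j\<leftarrow>is. x j))"

definition symmetric_tensor :: "nat \<Rightarrow> nat \<Rightarrow> tensor \<Rightarrow> bool" where
  "symmetric_tensor m n A \<longleftrightarrow>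
     (\<forall>is\<in>index_lists m n. \<forall>js. mset js = mset is \<longrightarrow> A js = A is)"

definition strongly_positive_definite :: "nat \<Rightarrow> nat \<Rightarrow> tensor \<Rightarrow> bool" where
  "strongly_positive_definite m n A \<longleftrightarrow>
     odd m \<and> symmetric_tensor m n A \<and>
     (\<forall>x::nat \<Rightarrow> real. (\<exists>i\<in>{1..n}. x i \<noteq> 0) \<longrightarrow>
        (\<forall>i\<in>{1..n}. tensor_apply m n A x i > 0))"

definition hilbert_tensor :: "nat \<Rightarrow> tensor" where
  "hilbert_tensor m is = 1 / (real (sum_list is) - real m + 1)"

end

theory Submission
  imports Defs "HOL-Computational_Algebra.Polynomial"
begin

lemma fin_index_lists: "finite (index_lists k n)"
proof -
  have "index_lists k n = {xs. set xs \<subseteq> {1..n} \<and> length xs = k}"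
    unfolding index_lists_def by auto
  then show ?thesis using finite_lists_length_eq[of "{1..n}" k] by simp
qed

lemma index_lists_Suc:
  "index_lists (Suc k) n = (\<lambda>(j,is). j # is) ` ({1..n} \<times> index_lists k n)"
proof
  show "index_lists (Suc k) n \<subseteq> (\<lambda>(j,is). j # is) ` ({1..n} \<times> index_lists k n)"
  proof
    fix xs assume "xs \<in> index_lists (Suc k) n"
    then obtain j ys where "xs = j # ys" "length ys = k" "j \<in> {1..n}" "set ys \<subseteq> {1..n}"
      unfolding index_lists_def by (cases xs) auto
    then show "xs \<in> (\<lambda>(j,is). j # is) ` ({1..n} \<times> index_lists k n)"
      unfolding index_lists_def by force
  qed
qed (auto simp: index_lists_def)

lemma sum_index_lists_prod:
  "(\<Sum>is\<in>index_lists k n. \<Prod>j\<leftarrow>is. (f j::real)) = (\<Sum>j\<in>{1..n}. f j) ^ k"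
proof (induction k)
  case 0
  have "index_lists 0 n = {[]}" by (auto simp: index_lists_def)
  then show ?case by simp
next
  case (Suc k)
  have inj: "inj_on (\<lambda>(j,is). j # (is::nat list)) ({1..n} \<times> index_lists k n)"
    by (auto simp: inj_on_def)
  have "(\<Sum>is\<in>index_lists (Suc k) n. \<Prod>j\<leftarrow>is. f j)
      = (\<Sum>(j0,is)\<in>{1..n} \<times> index_lists k n. f j0 * (\<Prod>j\<leftarrow>is. f j))"
    unfolding index_lists_Suc by (subst sum.reindex[OF inj]) (auto intro!: sum.cong simp: split_beta)
  also have "\<dots> = (\<Sum>j\<in>{1..n}. \<Sum>is\<in>index_lists k n. f j * (\<Prod>j\<leftarrow>is. f j))"
    by (rule sum.cartesian_product[symmetric])
  also have "\<dots> = (\<Sum>j\<in>{1..n}. f j) * (\<Sum>is\<in>index_lists k n. \<Prod>j\<leftarrow>is. f j)"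
    by (simp add: sum_product)
  finally show ?case using Suc by simp
qed

lemma prod_list_mult_pow:
  "(\<Prod>j\<leftarrow>is. (x j::real) * t ^ g j) = (\<Prod>j\<leftarrow>is. x j) * t ^ (\<Sum>j\<leftarrow>is. g j)"
  by (induction "is") (auto simp: power_add)

lemma sum_list_minus1:
  "set is \<subseteq> {1..n} \<Longrightarrow> (\<Sum>j\<leftarrow>is. j - 1) + length is = sum_list (is::nat list)"
  by (induction "is") auto

lemma pow_integral: "((\<lambda>t::real. t ^ k) has_integral 1 / (real k + 1)) {0..1}"
proof -
  have "((\<lambda>t::real. t ^ k) has_integral (1 ^ Suc k / Suc k - 0 ^ Suc k / Suc k)) {0..1}"
  proof (rule fundamental_theorem_of_calculus)
    fix x :: real
    have "DERIV (\<lambda>x. x^Suc k / Suc k) x :> x^k"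
      by (intro derivative_eq_intros) auto
    then show "((\<lambda>x. x ^ Suc k / real (Suc k)) has_vector_derivative x ^ k) (at x within {0..1})"
      by (simp add: has_real_derivative_iff_has_vector_derivative[symmetric] has_field_derivative_at_within)
  qed simp
  then show ?thesis by (simp add: add.commute)
qed

theorem corollary3p7:
  fixes m n :: nat
  assumes "odd m" and "m \<ge> 3" and "n \<ge> 2"
  shows "strongly_positive_definite m n (hilbert_tensor m)"
  unfolding strongly_positive_definite_def
proof (intro conjI allI impI ballI)
  show "odd m" by fact
  show "symmetric_tensor m n (hilbert_tensor m)"
    unfolding symmetric_tensor_def hilbert_tensor_def
    by (metis sum_mset_sum_list)
next
  fix x :: "nat \<Rightarrow> real" and i
  assume ex: "\<exists>i\<in>{1..n}. x i \<noteq> 0" and i: "i \<in> {1..n}"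
  define F where "F t = t ^ (i - 1) * (\<Sum>j\<in>{1..n}. x j * t ^ (j - 1)) ^ (m - 1)" for t :: real
  define e where "e is = (i - 1) + (\<Sum>j\<leftarrow>is. j - 1)" for "is" :: "nat list"
  have F_eq: "F t = (\<Sum>is\<in>index_lists (m - 1) n. (\<Prod>j\<leftarrow>is. x j) * t ^ e is)" for t
    unfolding F_def sum_index_lists_prod[symmetric] sum_distrib_left prod_list_mult_pow e_def
    by (auto intro!: sum.cong simp: power_add)
  have term_eq: "hilbert_tensor m (i # is) * (\<Prod>j\<leftarrow>is. x j) = (\<Prod>j\<leftarrow>is. x j) * (1 / (real (e is) + 1))"
    if "is \<in> index_lists (m - 1) n" for "is"
  proof -
    have "set is \<subseteq> {1..n}" "length is = m - 1" using that by (auto simp: index_lists_def)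
    from sum_list_minus1[OF this(1)] this(2) i assms(2)
    have "real (sum_list (i # is)) - real m + 1 = real (e is) + 1"
      unfolding e_def by (simp add: of_nat_diff)
    then show ?thesis unfolding hilbert_tensor_def by simp
  qed
  have hint: "(F has_integral tensor_apply m n (hilbert_tensor m) x i) {0..1}"
    unfolding F_eq[abs_def] tensor_apply_def
    by (rule has_integral_sum[OF fin_index_lists], subst term_eq, assumption)
       (intro has_integral_mult_right pow_integral)
  have cont: "continuous_on {0..1} F" unfolding F_def by (intro continuous_intros)
  have even: "even (m - 1)" using assms(1,2) by simp
  have Fnn: "F t \<ge> 0" if "t \<in> {0..1}" for t
    using that even unfolding F_def by (auto simp: zero_le_even_power)
  define P where "P = (\<Sum>j\<in>{1..n}. monom (x j) (j - 1))"
  obtain j0 where j0: "j0 \<in> {1..n}" "x j0 \<noteq> 0" using ex by blast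
  have "coeff P (j0 - 1) = (\<Sum>j\<in>{1..n}. if j - 1 = j0 - 1 then x j else 0)"
    unfolding P_def coeff_sum by simp
  also have "\<dots> = (\<Sum>j\<in>{j0}. x j)"
    using j0 by (intro sum.mono_neutral_cong_right) auto
  finally have "P \<noteq> 0" using j0 by auto
  then have fin: "finite {t. poly P t = 0}" by (rule poly_roots_finite)
  have "infinite {0<..<(1::real)}" by simp
  then obtain t where t: "t \<in> {0<..<(1::real)}" "poly P t \<noteq> 0"
    using fin by (metis (mono_tags, lifting) finite_subset mem_Collect_eq subsetI)
  have polyP: "poly P t = (\<Sum>j\<in>{1..n}. x j * t ^ (j - 1))"
    unfolding P_def poly_sum poly_monom by simp
  have "F t \<noteq> 0" using t polyP unfolding F_def by simp
  then have "F t > 0" using Fnn[of t] t by auto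
  have "tensor_apply m n (hilbert_tensor m) x i \<ge> 0"
    using has_integral_nonneg[OF hint] Fnn by auto
  moreover have "tensor_apply m n (hilbert_tensor m) x i \<noteq> 0"
  proof
    assume z: "tensor_apply m n (hilbert_tensor m) x i = 0"
    have "F t = 0"
      by (rule has_integral_0_cbox_imp_0[of 0 1 F])
         (use cont Fnn hint z t in auto)
    then show False using \<open>F t \<noteq> 0\<close> by simp
  qed
  ultimately show "tensor_apply m n (hilbert_tensor m) x i > 0" by simp
qed

end
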